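(* Let $n\ge2$, $0<\alpha\le1$, and let $M\colon[0,\infty)\times[0,\infty)\to[0,\infty)$ be symmetric and $\alpha$--homogeneous with $M(1,1)=1$, such that $\rho_M(x,y)=\dfrac{|x-y|}{M(|x|,|y|)}$ is a metric on $\mathbb{R}^n$. If $\alpha<1$, then $\rho_M$ is $\dfrac{2^\alpha}{1-\alpha}$--quasiconvex. If moreover $\alpha<1$ and $M(x,y)\le A_p(x,y)^\alpha$ for all $x,y\ge0$, for some $p\in(0,\infty]$, then $\rho_M$ is $c_{p,\alpha}$--quasiconvex, where $$c_{p,\alpha}=\frac{\max\{2^{\alpha(1-1/p)},1\}}{1-\alpha}\quad(1/\infty=0).$$
   Context: $M$ is $\alpha$--homogeneous if $M(tx,ty)=t^\alpha M(x,y)$. Power mean: $A_p(x,y)=\left(\frac{x^p+y^p}{2}\right)^{1/p}$ for $0<p<\infty$, and $A_\infty(x,y)=\max\{x,y\}$. Convention $0/0=0$. For a path $\gamma\colon[0,l]\to\mathbb{R}^n$, $\ell_M(\gamma)=\lim\sum_i\rho_M(\gamma(t_i),\gamma(t_{i+1}))$ over partitions with mesh tending to $0$. $\rho_M$ is $c$--quasiconvex if $\inf_\gamma\ell_M(\gamma)\le c\,\rho_M(x,y)$ for all $x,y$, infimum over rectifiable paths joining $x,y$. *)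

theory Defs
  imports "HOL-Analysis.Analysis"
begin

text \<open>The quasi-metric rho_M(x,y) = |x-y| / M(|x|,|y|); Isabelle's division gives 0/0 = 0.\<close>
definition rhoM :: "(real \<Rightarrow> real \<Rightarrow> real) \<Rightarrow> 'a::real_normed_vector \<Rightarrow> 'a \<Rightarrow> real" where
  "rhoM M x y = norm (x - y) / M (norm x) (norm y)"

definition is_partition :: "real \<Rightarrow> nat \<Rightarrow> (nat \<Rightarrow> real) \<Rightarrow> bool" where
  "is_partition l k t \<longleftrightarrow> t 0 = 0 \<and> t k = l \<and> (\<forall>i<k. t i < t (Suc i))"

definition mesh :: "nat \<Rightarrow> (nat \<Rightarrow> real) \<Rightarrow> real" where
  "mesh k t = Max (insert 0 ((\<lambda>i. t (Suc i) - t i) ` {..<k}))"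

definition partition_sum :: "('a \<Rightarrow> 'a \<Rightarrow> real) \<Rightarrow> ('b \<Rightarrow> 'a) \<Rightarrow> nat \<Rightarrow> (nat \<Rightarrow> 'b) \<Rightarrow> real" where
  "partition_sum d \<gamma> k t = (\<Sum>i<k. d (\<gamma> (t i)) (\<gamma> (t (Suc i))))"

definition rectifiable_on :: "real \<Rightarrow> (real \<Rightarrow> 'a::real_normed_vector) \<Rightarrow> bool" where
  "rectifiable_on l \<gamma> \<longleftrightarrow> 0 \<le> l \<and> continuous_on {0..l} \<gamma> \<and>
     (\<exists>B. \<forall>k t. is_partition l k t \<longrightarrow> partition_sum dist \<gamma> k t \<le> B)"

definition has_M_length ::
  "(real \<Rightarrow> real \<Rightarrow> real) \<Rightarrow> real \<Rightarrow> (real \<Rightarrow> 'a::real_normed_vector) \<Rightarrow> real \<Rightarrow> bool" where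
  "has_M_length M l \<gamma> L \<longleftrightarrow>
     (\<forall>\<epsilon>>0. \<exists>\<delta>>0. \<forall>k t. is_partition l k t \<and> mesh k t < \<delta> \<longrightarrow>
        \<bar>partition_sum (rhoM M) \<gamma> k t - L\<bar> < \<epsilon>)"

text \<open>c-quasiconvexity: inf over rectifiable paths joining x,y of ell_M \<le> c rho_M(x,y).
  Paths whose ell_M does not exist as a finite real contribute +infinity (or nothing) to the inf.\<close>
definition quasiconvex :: "(real \<Rightarrow> real \<Rightarrow> real) \<Rightarrow> real \<Rightarrow> 'a::real_normed_vector itself \<Rightarrow> bool" where
  "quasiconvex M c (_::'a itself) \<longleftrightarrow>
     (\<forall>x y::'a. Inf (ereal ` {L. \<exists>l \<gamma>. rectifiable_on l \<gamma> \<and> \<gamma> 0 = x \<and> \<gamma> l = y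
                                        \<and> has_M_length M l \<gamma> L})
               \<le> ereal (c * rhoM M x y))"

definition power_mean :: "ereal \<Rightarrow> real \<Rightarrow> real \<Rightarrow> real" where
  "power_mean p x y = (if p = \<infinity> then max x y
     else ((x powr real_of_ereal p + y powr real_of_ereal p) / 2) powr (1 / real_of_ereal p))"

definition inv_p :: "ereal \<Rightarrow> real" where
  "inv_p p = (if p = \<infinity> then 0 else 1 / real_of_ereal p)"

definition c_const :: "ereal \<Rightarrow> real \<Rightarrow> real" where
  "c_const p \<alpha> = max (2 powr (\<alpha> * (1 - inv_p p))) 1 / (1 - \<alpha>)"

end

theory Submission
  imports Defs
begin

lemma tangent_powr:
  fixes u v q :: real
  assumes "0 < u" "0 \<le> v" "0 < q" "q \<le> 1"
  shows "v powr q \<le> u powr q + q * u powr (q - 1) * (v - u)"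
proof (cases "v = 0")
  case True
  have "u powr q = u * u powr (q - 1)" using assms by (simp add: powr_diff)
  moreover have "q * u \<le> u" using assms by (simp add: mult_left_le_one_le)
  ultimately show ?thesis using True assms
    by (simp add: algebra_simps)
next
  case False
  then have vp: "v > 0" using assms by simp
  have "(v/u) powr q * 1 powr (1 - q) \<le> q * (v/u) + (1 - q) * 1"
    using Youngs_inequality_0[of q "1 - q" "v/u" 1] assms vp by simp
  then have h: "(v/u) powr q \<le> 1 + q * (v/u - 1)" by (simp add: algebra_simps)
  have "v powr q = u powr q * (v/u) powr q" using assms vp by (simp add: powr_divide)
  also have "\<dots> \<le> u powr q * (1 + q * (v/u - 1))"
    using h by (simp add: mult_left_mono)
  also have "\<dots> = u powr q + q * (u powr q / u) * (v - u)"
    using assms by (simp add: field_simps)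
  also have "u powr q / u = u powr (q - 1)" using assms by (simp add: powr_diff)
  finally show ?thesis .
qed

definition phi :: "real \<Rightarrow> real \<Rightarrow> real" where
  "phi q u = (if 0 \<le> u then u powr q else - ((- u) powr q))"

lemma phi_mono:
  assumes "0 < q" "v \<le> u" shows "phi q v \<le> phi q u"
  using assms unfolding phi_def
  by (auto intro: powr_mono2 order_trans[of _ 0])

lemma phi_bound: assumes "0 < q" shows "\<bar>phi q u\<bar> = \<bar>u\<bar> powr q"
  using assms unfolding phi_def by auto

lemma key_P1:
  fixes u v q :: real
  assumes "v < u" "0 < q" "q \<le> 1"
  shows "(u - v) * max \<bar>u\<bar> \<bar>v\<bar> powr (q - 1) \<le> (phi q u - phi q v) / q"
proof -
  consider "0 \<le> v" | "u \<le> 0" | "v < 0" "0 < u" by linarith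
  then show ?thesis
  proof cases
    case 1
    have "v powr q \<le> u powr q + q * u powr (q - 1) * (v - u)"
      using tangent_powr[of u v q] 1 assms by simp
    then have "q * ((u - v) * u powr (q - 1)) \<le> u powr q - v powr q"
      by (simp add: algebra_simps)
    then show ?thesis using 1 assms by (simp add: phi_def field_simps max_def)
  next
    case 2
    have "(-u) powr q \<le> (-v) powr q + q * (-v) powr (q - 1) * ((-u) - (-v))"
      using tangent_powr[of "-v" "-u" q] 2 assms by simp
    then have "q * ((u - v) * (-v) powr (q - 1)) \<le> (-v) powr q - (-u) powr q"
      by (simp add: algebra_simps)
    then show ?thesis using 2 assms
      by (auto simp add: phi_def field_simps max_def)
  next
    case 3
    define m where "m = max u (-v)"
    have m: "m > 0" "u \<le> m" "-v \<le> m" using 3 by (auto simp: m_def)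
    have mm: "max \<bar>u\<bar> \<bar>v\<bar> = m" using 3 by (auto simp: m_def)
    have e1: "u * m powr (q - 1) \<le> u powr q"
    proof -
      have "m powr (q - 1) \<le> u powr (q - 1)"
        using m 3 assms by (intro powr_mono2') auto
      then have "u * m powr (q - 1) \<le> u * u powr (q - 1)" using 3 by (simp add: mult_left_mono)
      also have "u * u powr (q - 1) = u powr q" using 3 by (simp add: powr_diff)
      finally show ?thesis .
    qed
    have e2: "(-v) * m powr (q - 1) \<le> (-v) powr q"
    proof -
      have "m powr (q - 1) \<le> (-v) powr (q - 1)"
        using m 3 assms by (intro powr_mono2') auto
      then have "(-v) * m powr (q - 1) \<le> (-v) * (-v) powr (q - 1)" using 3 by (simp add: mult_left_mono)
      also have "(-v) * (-v) powr (q - 1) = (-v) powr q" using 3 by (simp add: powr_diff)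
      finally show ?thesis .
    qed
    have "phi q u - phi q v = u powr q + (-v) powr q" using 3 by (simp add: phi_def)
    moreover have "u powr q + (-v) powr q \<le> (u powr q + (-v) powr q) / q"
    proof -
      have X: "0 \<le> u powr q + (-v) powr q" by simp
      have "(u powr q + (-v) powr q) * q \<le> u powr q + (-v) powr q"
        using mult_right_le_one_le[OF X _ assms(3)] assms by simp
      then show ?thesis using assms by (simp add: le_divide_eq)
    qed
    ultimately show ?thesis using e1 e2 mm by (simp add: algebra_simps)
  qed
qed

lemma mean_powr:
  fixes a b q :: real
  assumes "0 \<le> a" "0 \<le> b" "0 < q" "q \<le> 1"
  shows "(a powr q + b powr q) / 2 \<le> ((a + b) / 2) powr q"
proof (cases "a + b = 0")
  case True then have "a = 0" "b = 0" using assms by auto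
  then show ?thesis by simp
next
  case False
  define m where "m = (a + b) / 2"
  have m: "m > 0" using False assms by (simp add: m_def)
  have "a powr q \<le> m powr q + q * m powr (q - 1) * (a - m)"
    using tangent_powr[of m a q] m assms by simp
  moreover have "b powr q \<le> m powr q + q * m powr (q - 1) * (b - m)"
    using tangent_powr[of m b q] m assms by simp
  ultimately have "a powr q + b powr q \<le> 2 * m powr q + q * m powr (q - 1) * (a + b - 2 * m)"
    by (simp add: algebra_simps)
  moreover have "a + b - 2 * m = 0" by (simp add: m_def)
  ultimately have "a powr q + b powr q \<le> 2 * m powr q" by simp
  then show ?thesis by (simp add: m_def)
qed

lemma superadd_powr:
  fixes a b p :: real
  assumes "0 \<le> a" "0 \<le> b" "1 \<le> p"
  shows "a powr p + b powr p \<le> (a + b) powr p"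
proof (cases "a + b = 0")
  case True then have "a = 0" "b = 0" using assms by auto
  then show ?thesis by simp
next
  case False
  define s where "s = a + b"
  have s: "s > 0" using False assms by (simp add: s_def)
  have "(a/s) powr p \<le> (a/s) powr 1"
    using assms s by (intro powr_mono') (auto simp: s_def)
  moreover have "(b/s) powr p \<le> (b/s) powr 1"
    using assms s by (intro powr_mono') (auto simp: s_def)
  moreover have "a/s + b/s = 1" using s by (simp add: s_def add_divide_distrib[symmetric])
  ultimately have "(a/s) powr p + (b/s) powr p \<le> 1"
    using s assms by simp
  then have "(a powr p + b powr p) / s powr p \<le> 1"
    using assms s by (simp add: powr_divide add_divide_distrib)
  then show ?thesis using s by (simp add: s_def)
qed



lemma part_mono:
  assumes "is_partition l k t" "i \<le> j" "j \<le> k" shows "t i \<le> t j"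
  using assms(2,3)
proof (induction j)
  case 0 then show ?case by simp
next
  case (Suc j)
  show ?case
  proof (cases "i \<le> j")
    case True
    then have "t i \<le> t j" using Suc by simp
    moreover have "t j < t (Suc j)" using assms(1) Suc unfolding is_partition_def by auto
    ultimately show ?thesis by simp
  next
    case False then have "i = Suc j" using Suc by simp
    then show ?thesis by simp
  qed
qed

lemma part_range:
  assumes "is_partition l k t" "i \<le> k" shows "0 \<le> t i" "t i \<le> l"
  using part_mono[OF assms(1), of 0 i] part_mono[OF assms(1), of i k] assms
  unfolding is_partition_def by auto

lemma part_strict:
  assumes "is_partition l k t" "i < j" "j \<le> k" shows "t i < t j"
proof -
  have "t i < t (Suc i)" using assms unfolding is_partition_def by auto
  also have "t (Suc i) \<le> t j" using part_mono[OF assms(1), of "Suc i" j] assms by auto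
  finally show ?thesis .
qed

lemma gap_le_mesh:
  assumes "i < k" shows "t (Suc i) - t i \<le> mesh k t"
  unfolding mesh_def using assms by (intro Max_ge) auto

lemma mesh_nonneg: "0 \<le> mesh k t"
  unfolding mesh_def by (intro Max_ge) auto

lemma chain_ineq:
  fixes d :: "'a \<Rightarrow> 'a \<Rightarrow> real"
  assumes tri: "\<And>x y z. d x z \<le> d x y + d y z" and z: "\<And>x. d x x = 0" and "a \<le> b"
  shows "d (f a) (f b) \<le> (\<Sum>i\<in>{a..<b}. d (f i) (f (Suc i)))"
  using assms(3)
proof (induction b)
  case 0 then show ?case using z by simp
next
  case (Suc b)
  show ?case
  proof (cases "a \<le> b")
    case True
    have "d (f a) (f (Suc b)) \<le> d (f a) (f b) + d (f b) (f (Suc b))" by (rule tri)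
    also have "\<dots> \<le> (\<Sum>i\<in>{a..<b}. d (f i) (f (Suc i))) + d (f b) (f (Suc b))"
      using Suc True by simp
    also have "\<dots> = (\<Sum>i\<in>{a..<Suc b}. d (f i) (f (Suc i)))" using True by simp
    finally show ?thesis .
  next
    case False then have "a = Suc b" using Suc by simp
    then show ?thesis using z by simp
  qed
qed

lemma comp_partition:
  fixes d :: "'a \<Rightarrow> 'a \<Rightarrow> real" and \<gamma> :: "real \<Rightarrow> 'a"
  assumes tri: "\<And>x y z. d x z \<le> d x y + d y z" and z: "\<And>x. d x x = 0"
    and sym: "\<And>x y. d x y = d y x" and nn: "\<And>x y. 0 \<le> d x y"
    and P: "is_partition l k p" and Q: "is_partition l K q" and mQ: "mesh K q < \<delta>"
    and uc: "\<And>s t. 0 \<le> s \<Longrightarrow> s \<le> t \<Longrightarrow> t \<le> l \<Longrightarrow> t - s < \<delta> \<Longrightarrow> d (\<gamma> s) (\<gamma> t) \<le> \<eta>"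
  shows "partition_sum d \<gamma> k p \<le> partition_sum d \<gamma> K q + 2 * real k * \<eta>"
proof -
  define \<sigma> where "\<sigma> j = (LEAST i. p j \<le> q i)" for j
  define D where "D i = d (\<gamma> (q i)) (\<gamma> (q (Suc i)))" for i
  have qK: "q K = l" "q 0 = 0" using Q unfolding is_partition_def by auto
  have s1: "\<sigma> j \<le> K \<and> p j \<le> q (\<sigma> j)" if "j \<le> k" for j
  proof -
    have "p j \<le> q K" using part_range[OF P that] qK by simp
    then show ?thesis unfolding \<sigma>_def by (metis LeastI Least_le)
  qed
  have s2: "d (\<gamma> (p j)) (\<gamma> (q (\<sigma> j))) \<le> \<eta>" if "j \<le> k" for j
  proof (cases "\<sigma> j = 0")
    case True
    then have "p j = q (\<sigma> j)" using s1[OF that] part_range[OF P that] qK by simp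
    then show ?thesis using uc[of "p j" "p j"] part_range[OF P that] mQ mesh_nonneg[of K q]
      by simp
  next
    case False
    then have "\<not> p j \<le> q (\<sigma> j - 1)" unfolding \<sigma>_def
      by (metis diff_less not_less_Least zero_less_iff_neq_zero zero_less_one)
    moreover have "q (Suc (\<sigma> j - 1)) - q (\<sigma> j - 1) \<le> mesh K q"
      using s1[OF that] False by (intro gap_le_mesh) auto
    ultimately have "q (\<sigma> j) - p j < \<delta>" using False mQ by simp
    then show ?thesis using uc[of "p j" "q (\<sigma> j)"] part_range[OF P that] s1[OF that]
      part_range[OF Q, of "\<sigma> j"] by simp
  qed
  have smono: "\<sigma> j \<le> \<sigma> j'" if "j \<le> j'" "j' \<le> k" for j j'
  proof -
    have "p j \<le> p j'" using part_mono[OF P that] .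
    also have "\<dots> \<le> q (\<sigma> j')" using s1[OF that(2)] by simp
    finally show ?thesis unfolding \<sigma>_def[of j] by (rule Least_le)
  qed
  have step: "d (\<gamma> (p j)) (\<gamma> (p (Suc j))) \<le> 2 * \<eta> + (\<Sum>i\<in>{\<sigma> j..<\<sigma> (Suc j)}. D i)" if "j < k" for j
  proof -
    have "d (\<gamma> (p j)) (\<gamma> (p (Suc j))) \<le> d (\<gamma> (p j)) (\<gamma> (q (\<sigma> j))) + d (\<gamma> (q (\<sigma> j))) (\<gamma> (p (Suc j)))"
      by (rule tri)
    also have "d (\<gamma> (q (\<sigma> j))) (\<gamma> (p (Suc j))) \<le> d (\<gamma> (q (\<sigma> j))) (\<gamma> (q (\<sigma> (Suc j)))) + d (\<gamma> (q (\<sigma> (Suc j)))) (\<gamma> (p (Suc j)))"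
      by (rule tri)
    also have "d (\<gamma> (q (\<sigma> (Suc j)))) (\<gamma> (p (Suc j))) \<le> \<eta>"
      using s2[of "Suc j"] that sym by simp
    also have "d (\<gamma> (q (\<sigma> j))) (\<gamma> (q (\<sigma> (Suc j)))) \<le> (\<Sum>i\<in>{\<sigma> j..<\<sigma> (Suc j)}. D i)"
      unfolding D_def using chain_ineq[where d=d and f="\<lambda>i. \<gamma> (q i)", OF tri z] smono[of j "Suc j"] that by simp
    finally show ?thesis using s2[of j] that by simp
  qed
  have tele: "(\<Sum>j<m. (\<Sum>i\<in>{\<sigma> j..<\<sigma> (Suc j)}. D i)) = (\<Sum>i\<in>{\<sigma> 0..<\<sigma> m}. D i)" if "m \<le> k" for m
    using that
  proof (induction m)
    case 0 then show ?case by simp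
  next
    case (Suc m)
    then show ?case using smono[of 0 m] smono[of m "Suc m"]
      by (simp add: sum.atLeastLessThan_concat)
  qed
  have "partition_sum d \<gamma> k p \<le> (\<Sum>j<k. 2 * \<eta> + (\<Sum>i\<in>{\<sigma> j..<\<sigma> (Suc j)}. D i))"
    unfolding partition_sum_def by (intro sum_mono step) simp
  also have "\<dots> = 2 * real k * \<eta> + (\<Sum>i\<in>{\<sigma> 0..<\<sigma> k}. D i)"
    using tele[of k] by (simp add: sum.distrib)
  also have "(\<Sum>i\<in>{\<sigma> 0..<\<sigma> k}. D i) \<le> (\<Sum>i<K. D i)"
    using s1[of k] by (intro sum_mono2) (auto simp: D_def nn)
  finally show ?thesis unfolding partition_sum_def D_def by simp
qed

lemma small_mesh_exists:
  assumes "0 < l" "0 < \<delta>" shows "\<exists>K q. is_partition l K q \<and> mesh K q < \<delta>"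
proof -
  obtain N :: nat where N: "l / \<delta> < N" using reals_Archimedean2 by blast
  have Np: "0 < real N" using N assms by (smt (verit) divide_pos_pos)
  define q where "q i = l * real i / real N" for i
  have P: "is_partition l N q" unfolding is_partition_def q_def using Np assms
    by (auto simp: divide_strict_right_mono)
  have "mesh N q \<le> l / N" unfolding mesh_def q_def using Np assms
    by (intro Max.boundedI) (auto simp: field_simps)
  also have "l / N < \<delta>" using N Np assms by (simp add: field_simps)
  finally show ?thesis using P by blast
qed

lemma limit_lemma:
  fixes d :: "'a \<Rightarrow> 'a \<Rightarrow> real" and \<gamma> :: "real \<Rightarrow> 'a"
  assumes l: "0 < l"
    and tri: "\<And>x y z. d x z \<le> d x y + d y z" and z: "\<And>x. d x x = 0"
    and sym: "\<And>x y. d x y = d y x" and nn: "\<And>x y. 0 \<le> d x y"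
    and uc: "\<And>\<eta>. \<eta> > 0 \<Longrightarrow> \<exists>\<delta>>0. \<forall>s t. 0 \<le> s \<longrightarrow> s \<le> t \<longrightarrow> t \<le> l \<longrightarrow> t - s < \<delta> \<longrightarrow> d (\<gamma> s) (\<gamma> t) \<le> \<eta>"
    and fine: "\<And>\<eta>. \<eta> > 0 \<Longrightarrow> \<exists>\<delta>>0. \<forall>k t. is_partition l k t \<longrightarrow> mesh k t < \<delta> \<longrightarrow> partition_sum d \<gamma> k t \<le> B + \<eta>"
  shows "\<exists>L\<le>B. \<forall>\<epsilon>>0. \<exists>\<delta>>0. \<forall>k t. is_partition l k t \<and> mesh k t < \<delta> \<longrightarrow> \<bar>partition_sum d \<gamma> k t - L\<bar> < \<epsilon>"
proof -
  have allb: "partition_sum d \<gamma> k p \<le> B" if P: "is_partition l k p" for k p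
  proof (rule field_le_epsilon)
    fix e :: real assume e: "0 < e"
    define \<eta> where "\<eta> = e / (2 * real k + 1)"
    have \<eta>: "\<eta> > 0" using e by (simp add: \<eta>_def)
    obtain \<delta>1 where d1: "\<delta>1 > 0" "\<forall>k t. is_partition l k t \<longrightarrow> mesh k t < \<delta>1 \<longrightarrow> partition_sum d \<gamma> k t \<le> B + \<eta>"
      using fine[OF \<eta>] by blast
    obtain \<delta>2 where d2: "\<delta>2 > 0" "\<forall>s t. 0 \<le> s \<longrightarrow> s \<le> t \<longrightarrow> t \<le> l \<longrightarrow> t - s < \<delta>2 \<longrightarrow> d (\<gamma> s) (\<gamma> t) \<le> \<eta>"
      using uc[OF \<eta>] by blast
    obtain K q where Q: "is_partition l K q" "mesh K q < min \<delta>1 \<delta>2"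
      using small_mesh_exists[OF l, of "min \<delta>1 \<delta>2"] d1 d2 by auto
    have "partition_sum d \<gamma> k p \<le> partition_sum d \<gamma> K q + 2 * real k * \<eta>"
      using comp_partition[where \<delta>="min \<delta>1 \<delta>2" and \<gamma>=\<gamma> and \<eta>=\<eta>, OF tri z sym nn P Q(1)] Q d2 by auto
    also have "\<dots> \<le> B + (\<eta> + 2 * real k * \<eta>)" using d1 Q by auto
    also have "\<eta> + 2 * real k * \<eta> = (2 * real k + 1) * \<eta>" by (simp add: algebra_simps)
    also have "\<dots> = e" unfolding \<eta>_def by simp
    finally show "partition_sum d \<gamma> k p \<le> B + e" by simp
  qed
  define S where "S = {partition_sum d \<gamma> k p | k p. is_partition l k p}"
  define L where "L = Sup S"
  have Sne: "S \<noteq> {}" using small_mesh_exists[OF l, of 1] unfolding S_def by auto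
  have Sbdd: "bdd_above S" unfolding S_def bdd_above_def using allb by blast
  have LB: "L \<le> B" unfolding L_def using Sne allb by (intro cSup_least) (auto simp: S_def)
  have up: "partition_sum d \<gamma> k p \<le> L" if "is_partition l k p" for k p
    unfolding L_def using that Sbdd by (intro cSup_upper) (auto simp: S_def)
  have "\<forall>\<epsilon>>0. \<exists>\<delta>>0. \<forall>k t. is_partition l k t \<and> mesh k t < \<delta> \<longrightarrow> \<bar>partition_sum d \<gamma> k t - L\<bar> < \<epsilon>"
  proof (intro allI impI)
    fix \<epsilon> :: real assume e: "\<epsilon> > 0"
    have "L - \<epsilon>/2 < Sup S" using e by (simp add: L_def)
    then obtain x where "x \<in> S" "L - \<epsilon>/2 < x" using less_cSup_iff[OF Sne Sbdd] by auto
    then obtain k0 p0 where P0: "is_partition l k0 p0" "L - \<epsilon>/2 < partition_sum d \<gamma> k0 p0"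
      unfolding S_def by auto
    define \<eta> where "\<eta> = \<epsilon> / (4 * (real k0 + 1))"
    have \<eta>: "\<eta> > 0" using e by (simp add: \<eta>_def)
    obtain \<delta> where d: "\<delta> > 0" "\<forall>s t. 0 \<le> s \<longrightarrow> s \<le> t \<longrightarrow> t \<le> l \<longrightarrow> t - s < \<delta> \<longrightarrow> d (\<gamma> s) (\<gamma> t) \<le> \<eta>"
      using uc[OF \<eta>] by blast
    have "\<forall>k t. is_partition l k t \<and> mesh k t < \<delta> \<longrightarrow> \<bar>partition_sum d \<gamma> k t - L\<bar> < \<epsilon>"
    proof (intro allI impI)
      fix k t assume Q: "is_partition l k t \<and> mesh k t < \<delta>"
      have "partition_sum d \<gamma> k0 p0 \<le> partition_sum d \<gamma> k t + 2 * real k0 * \<eta>"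
        using comp_partition[where K=k and q=t and \<delta>=\<delta> and \<gamma>=\<gamma> and \<eta>=\<eta>, OF tri z sym nn P0(1)] Q d by auto
      moreover have "2 * real k0 * \<eta> < \<epsilon> / 2" unfolding \<eta>_def using e
        by (simp add: field_simps)
      moreover have "partition_sum d \<gamma> k t \<le> L" using up Q by auto
      ultimately show "\<bar>partition_sum d \<gamma> k t - L\<bar> < \<epsilon>" using P0 by linarith
    qed
    then show "\<exists>\<delta>>0. \<forall>k t. is_partition l k t \<and> mesh k t < \<delta> \<longrightarrow> \<bar>partition_sum d \<gamma> k t - L\<bar> < \<epsilon>"
      using d by blast
  qed
  then show ?thesis using LB by blast
qed



lemma norm_onb:
  fixes e v :: "'a::real_inner"
  assumes "norm e = 1" "norm v = 1" "inner e v = 0"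
  shows "norm (p *\<^sub>R e + r *\<^sub>R v) = sqrt (p\<^sup>2 + r\<^sup>2)"
proof -
  have ee: "inner e e = 1" "inner v v = 1" "inner v e = 0"
    using assms by (auto simp: power2_norm_eq_inner[symmetric] inner_commute)
  show ?thesis unfolding norm_eq_sqrt_inner
    by (simp add: inner_add_left inner_add_right ee assms power2_eq_square)
qed

locale Mset =
  fixes M :: "real \<Rightarrow> real \<Rightarrow> real" and \<alpha> :: real and e v :: "'a::real_inner"
  assumes alpha: "0 < \<alpha>" "\<alpha> < 1"
    and M_nonneg: "\<And>x y. 0 \<le> x \<Longrightarrow> 0 \<le> y \<Longrightarrow> 0 \<le> M x y"
    and M_sym: "\<And>x y. 0 \<le> x \<Longrightarrow> 0 \<le> y \<Longrightarrow> M x y = M y x"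
    and M_hom: "\<And>t x y. 0 < t \<Longrightarrow> 0 \<le> x \<Longrightarrow> 0 \<le> y \<Longrightarrow> M (t * x) (t * y) = t powr \<alpha> * M x y"
    and M11: "M 1 1 = 1"
    and metric: "Metric_space (UNIV :: 'a set) (rhoM M)"
    and e1: "norm e = 1" and v1: "norm v = 1" and ev: "inner e v = 0"
begin

abbreviation "rho \<equiv> rhoM M :: 'a \<Rightarrow> 'a \<Rightarrow> real"

lemma rho_tri: "rho x z \<le> rho x y + rho y z"
  using Metric_space.triangle[OF metric] by simp
lemma rho_sym: "rho x y = rho y x"
  using Metric_space.commute[OF metric] by simp
lemma rho_nn: "0 \<le> rho x y"
  using Metric_space.nonneg[OF metric] by simp
lemma rho_zero: "rho x y = 0 \<longleftrightarrow> x = y"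
  using Metric_space.zero[OF metric] by simp
lemma rho_xx: "rho x x = 0" by (simp add: rhoM_def)

lemma M_diag: assumes "0 \<le> A" shows "M A A = A powr \<alpha>"
proof (cases "A = 0")
  case True
  have "M (2 * 0) (2 * 0) = 2 powr \<alpha> * M 0 0" by (rule M_hom) auto
  then have "M 0 0 * (2 powr \<alpha> - 1) = 0" by (simp add: algebra_simps)
  moreover have "2 powr \<alpha> \<noteq> 1" using alpha by simp
  ultimately show ?thesis using True by simp
next
  case False
  then have "M (A * 1) (A * 1) = A powr \<alpha> * M 1 1" using assms by (intro M_hom) auto
  then show ?thesis using M11 by simp
qed

definition "m0 = M 0 1"

lemma M_zero_left: assumes "0 < B" shows "M 0 B = B powr \<alpha> * m0"
  using M_hom[of B 0 1] assms by (simp add: m0_def)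

lemma m0_pos: "m0 > 0"
proof -
  have "e \<noteq> 0" using e1 by auto
  then have "rho 0 e \<noteq> 0" using rho_zero by simp
  then have "M 0 1 \<noteq> 0" by (simp add: rhoM_def e1)
  moreover have "M 0 1 \<ge> 0" by (rule M_nonneg) auto
  ultimately show ?thesis by (simp add: m0_def)
qed

lemma M_pos: assumes "0 \<le> A" "0 \<le> B" "0 < A + B" shows "M A B > 0"
proof -
  have "A *\<^sub>R e - (- (B *\<^sub>R e)) = (A + B) *\<^sub>R e" by (simp add: algebra_simps)
  then have n: "norm (A *\<^sub>R e - (- (B *\<^sub>R e))) = A + B" using assms e1 by simp
  then have "A *\<^sub>R e \<noteq> - (B *\<^sub>R e)" using assms by auto
  then have "rho (A *\<^sub>R e) (- (B *\<^sub>R e)) \<noteq> 0" using rho_zero by simp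
  then have "M A B \<noteq> 0" using assms e1 by (simp add: rhoM_def)
  then show ?thesis using M_nonneg[OF assms(1,2)] by simp
qed

lemma rho_to_zero: assumes "0 \<le> A" "A \<le> m" "0 < m"
  shows "rho (A *\<^sub>R e) 0 \<le> m powr (1 - \<alpha>) / m0"
proof (cases "A = 0")
  case True then show ?thesis using m0_pos by (simp add: rhoM_def)
next
  case False
  then have A: "A > 0" using assms by simp
  have "rho (A *\<^sub>R e) 0 = A / M A 0" using assms e1 by (simp add: rhoM_def)
  also have "M A 0 = A powr \<alpha> * m0" using M_sym[of A 0] M_zero_left[OF A] assms by simp
  also have "A / (A powr \<alpha> * m0) = A powr (1 - \<alpha>) / m0" using A m0_pos
    by (simp add: powr_diff field_simps)
  also have "\<dots> \<le> m powr (1 - \<alpha>) / m0" using A assms alpha m0_pos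
    by (intro divide_right_mono powr_mono2) auto
  finally show ?thesis .
qed

lemma M_low_global:
  assumes "0 \<le> A" "0 \<le> B" "0 < A + B"
  shows "m0 * max A B powr \<alpha> / 2 \<le> M A B"
proof -
  define m where "m = max A B"
  have m: "m > 0" "A \<le> m" "B \<le> m" "m \<le> A + B" using assms by (auto simp: m_def)
  have Mp: "M A B > 0" using M_pos[OF assms] .
  have "A *\<^sub>R e - (- (B *\<^sub>R e)) = (A + B) *\<^sub>R e" by (simp add: algebra_simps)
  then have "rho (A *\<^sub>R e) (- (B *\<^sub>R e)) = (A + B) / M A B" using assms e1 by (simp add: rhoM_def)
  moreover have "rho (A *\<^sub>R e) (- (B *\<^sub>R e)) \<le> rho (A *\<^sub>R e) 0 + rho 0 (- (B *\<^sub>R e))" by (rule rho_tri)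
  moreover have "rho 0 (- (B *\<^sub>R e)) = rho (B *\<^sub>R e) 0"
    using assms e1 by (simp add: rhoM_def M_sym[of 0 B])
  moreover have "rho (A *\<^sub>R e) 0 \<le> m powr (1 - \<alpha>) / m0" using rho_to_zero assms m by simp
  moreover have "rho (B *\<^sub>R e) 0 \<le> m powr (1 - \<alpha>) / m0" using rho_to_zero assms m by simp
  ultimately have "(A + B) / M A B \<le> 2 * (m powr (1 - \<alpha>) / m0)" by simp
  moreover have "m / M A B \<le> (A + B) / M A B" using m Mp by (intro divide_right_mono) auto
  ultimately have "m / M A B \<le> 2 * (m powr (1 - \<alpha>) / m0)" by linarith
  then have "m * m0 \<le> 2 * m powr (1 - \<alpha>) * M A B" using Mp m0_pos by (simp add: field_simps)
  moreover have "m = m powr (1 - \<alpha>) * m powr \<alpha>" using m by (simp flip: powr_add)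
  ultimately have "m powr (1 - \<alpha>) * (m powr \<alpha> * m0) \<le> m powr (1 - \<alpha>) * (2 * M A B)"
    by (simp add: algebra_simps)
  then have "m powr \<alpha> * m0 \<le> 2 * M A B" using m by simp
  then show ?thesis by (simp add: m_def algebra_simps)
qed

lemma M_upper: assumes "0 \<le> A" "0 \<le> B" shows "M A B \<le> max A B powr \<alpha>"
proof -
  have main: "M A B \<le> B powr \<alpha>" if "0 \<le> A" "A \<le> B" for A B
  proof (cases "B = 0")
    case True then show ?thesis using that M_diag[of 0] by simp
  next
    case False
    then have B: "B > 0" using that by simp
    have Mp: "M A B > 0" using M_pos[of A B] that B by simp
    have r1: "rho (B *\<^sub>R e) (- (B *\<^sub>R e)) = 2 * B / B powr \<alpha>"
    proof -
      have "B *\<^sub>R e - - (B *\<^sub>R e) = (2 * B) *\<^sub>R e" by (simp add: scaleR_left_distrib[symmetric])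
      then show ?thesis using B e1 M_diag[of B] by (simp add: rhoM_def)
    qed
    have r2: "rho (B *\<^sub>R e) (A *\<^sub>R e) = (B - A) / M A B"
    proof -
      have "B *\<^sub>R e - A *\<^sub>R e = (B - A) *\<^sub>R e" by (simp add: algebra_simps)
      then show ?thesis using that e1 M_sym[of A B] by (simp add: rhoM_def)
    qed
    have r3: "rho (A *\<^sub>R e) (- (B *\<^sub>R e)) = (A + B) / M A B"
    proof -
      have "A *\<^sub>R e - - (B *\<^sub>R e) = (A + B) *\<^sub>R e" by (simp add: algebra_simps)
      then show ?thesis using that e1 by (simp add: rhoM_def)
    qed
    have "2 * B / B powr \<alpha> \<le> (B - A) / M A B + (A + B) / M A B"
      using rho_tri[of "B *\<^sub>R e" "- (B *\<^sub>R e)" "A *\<^sub>R e"] r1 r2 r3 by simp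
    also have "\<dots> = 2 * B / M A B" by (simp add: add_divide_distrib[symmetric])
    finally have "2 * B / B powr \<alpha> \<le> 2 * B / M A B" .
    then show ?thesis using B Mp by (simp add: divide_le_eq field_simps)
  qed
  show ?thesis
  proof (cases "A \<le> B")
    case True then show ?thesis using main[of A B] assms by simp
  next
    case False then show ?thesis using main[of B A] assms M_sym[of A B] by simp
  qed
qed

end


context Mset begin

lemma M_near1:
  assumes th: "0 < \<theta>" and l1: "1 \<le> \<kappa>" and l2: "\<kappa> \<le> 1 + \<theta> / (2 * (1 + \<theta>))"
  shows "\<kappa> powr \<alpha> / (1 + \<theta>) \<le> M 1 \<kappa>"
proof (cases "\<kappa> = 1")
  case True then show ?thesis using M11 th by simp
next
  case False
  then have lg: "\<kappa> > 1" using l1 by simp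
  define T where "T = 2 * (1 + \<theta>) / \<theta>"
  define \<delta> where "\<delta> = T * (\<kappa> - 1)"
  have T: "T > 1" using th by (simp add: T_def field_simps)
  have d0: "\<delta> > 0" using T lg by (simp add: \<delta>_def)
  have d1: "\<delta> \<le> 1"
  proof -
    have "\<delta> \<le> T * (\<theta> / (2 * (1 + \<theta>)))" unfolding \<delta>_def using T l2 by (intro mult_left_mono) auto
    also have "\<dots> = 1" using th by (simp add: T_def)
    finally show ?thesis .
  qed
  define c where "c = 1 - \<delta>\<^sup>2 / 2"
  define s where "s = sqrt (1 - c\<^sup>2)"
  have c: "c \<ge> 1/2" "c \<le> 1" using d0 d1 by (auto simp: c_def power_le_one)
  have cs: "c\<^sup>2 + s\<^sup>2 = 1" using c by (simp add: s_def power_le_one abs_le_iff)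
  define e' where "e' = c *\<^sub>R e + s *\<^sub>R v"
  have ne': "norm e' = 1" using norm_onb[OF e1 v1 ev, of c s] cs by (simp add: e'_def)
  have nee': "norm (e - e') = \<delta>"
  proof -
    have "e - e' = (1 - c) *\<^sub>R e + (- s) *\<^sub>R v" by (simp add: e'_def algebra_simps)
    then have "norm (e - e') = sqrt ((1 - c)\<^sup>2 + s\<^sup>2)" using norm_onb[OF e1 v1 ev, of "1 - c" "- s"]
      by (simp only:) simp
    also have "(1 - c)\<^sup>2 + s\<^sup>2 = \<delta>\<^sup>2" using cs by (simp add: c_def power2_eq_square algebra_simps)
    finally show ?thesis using d0 by simp
  qed
  define N1 where "N1 = norm (e - \<kappa> *\<^sub>R e')"
  have N1: "N1 \<ge> \<delta>"
  proof -
    have "e - \<kappa> *\<^sub>R e' = (1 - \<kappa> * c) *\<^sub>R e + (- (\<kappa> * s)) *\<^sub>R v" by (simp add: e'_def algebra_simps)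
    then have "N1 = sqrt ((1 - \<kappa> * c)\<^sup>2 + (\<kappa> * s)\<^sup>2)"
      using norm_onb[OF e1 v1 ev, of "1 - \<kappa> * c" "- (\<kappa> * s)"] unfolding N1_def by (simp only:) simp
    also have "(1 - \<kappa> * c)\<^sup>2 + (\<kappa> * s)\<^sup>2 = (\<kappa> - 1)\<^sup>2 + \<kappa> * \<delta>\<^sup>2"
    proof -
      have "(1 - \<kappa> * c)\<^sup>2 + (\<kappa> * s)\<^sup>2 = 1 - 2 * \<kappa> * c + \<kappa>\<^sup>2 * (c\<^sup>2 + s\<^sup>2)"
        by (simp add: power2_eq_square algebra_simps)
      also have "\<dots> = 1 - 2 * \<kappa> * c + \<kappa>\<^sup>2" using cs by simp
      finally show ?thesis by (simp add: c_def power2_eq_square algebra_simps)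
    qed
    also have "sqrt ((\<kappa> - 1)\<^sup>2 + \<kappa> * \<delta>\<^sup>2) \<ge> sqrt (\<delta>\<^sup>2)"
      using lg by (intro real_sqrt_le_mono) (smt (verit) mult_le_cancel_right1 zero_le_power2)
    finally show ?thesis using d0 by simp
  qed
  have Mp: "M 1 \<kappa> > 0" using M_pos[of 1 \<kappa>] lg by simp
  have r1: "rho e (\<kappa> *\<^sub>R e') = N1 / M 1 \<kappa>" using e1 ne' lg by (simp add: rhoM_def N1_def)
  have r2: "rho e (\<kappa> *\<^sub>R e) = (\<kappa> - 1) / M 1 \<kappa>"
  proof -
    have "e - \<kappa> *\<^sub>R e = (1 - \<kappa>) *\<^sub>R e" by (simp add: algebra_simps)
    then show ?thesis using e1 lg by (simp add: rhoM_def)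
  qed
  have r3: "rho (\<kappa> *\<^sub>R e) (\<kappa> *\<^sub>R e') = \<kappa> * \<delta> / \<kappa> powr \<alpha>"
  proof -
    have "\<kappa> *\<^sub>R e - \<kappa> *\<^sub>R e' = \<kappa> *\<^sub>R (e - e')" by (simp add: algebra_simps)
    then show ?thesis using e1 ne' nee' lg M_diag[of \<kappa>] by (simp add: rhoM_def)
  qed
  have "N1 / M 1 \<kappa> \<le> (\<kappa> - 1) / M 1 \<kappa> + \<kappa> * \<delta> / \<kappa> powr \<alpha>"
    using rho_tri[of e "\<kappa> *\<^sub>R e'" "\<kappa> *\<^sub>R e"] r1 r2 r3 by simp
  then have "N1 - (\<kappa> - 1) \<le> M 1 \<kappa> * (\<kappa> * \<delta> / \<kappa> powr \<alpha>)"
    using Mp by (simp add: field_simps)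
  moreover have "\<kappa> * \<delta> / \<kappa> powr \<alpha> = \<delta> * \<kappa> powr (1 - \<alpha>)" using lg by (simp add: powr_diff)
  ultimately have "N1 - (\<kappa> - 1) \<le> M 1 \<kappa> * (\<delta> * \<kappa> powr (1 - \<alpha>))" by simp
  moreover have "(T - 1) * (\<kappa> - 1) \<le> N1 - (\<kappa> - 1)" using N1 by (simp add: \<delta>_def algebra_simps)
  ultimately have h: "(T - 1) * (\<kappa> - 1) \<le> M 1 \<kappa> * \<kappa> powr (1 - \<alpha>) * T * (\<kappa> - 1)"
    by (simp add: \<delta>_def algebra_simps)
  have h2: "T - 1 \<le> M 1 \<kappa> * \<kappa> powr (1 - \<alpha>) * T" using h lg by simp
  have "\<kappa> * T \<le> (1 + \<theta>) * (T - 1)"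
  proof -
    have "(1 + \<theta>) * (T - 1) = T * (1 + \<theta> / 2)" using th by (simp add: T_def field_simps)
    moreover have "\<kappa> \<le> 1 + \<theta> / 2"
    proof -
      have "\<theta> / (2 * (1 + \<theta>)) \<le> \<theta> / 2" using th by (intro divide_left_mono) auto
      then show ?thesis using l2 by linarith
    qed
    ultimately show ?thesis using T by simp
  qed
  also have "\<dots> \<le> (1 + \<theta>) * (M 1 \<kappa> * \<kappa> powr (1 - \<alpha>) * T)" using h2 th by simp
  finally have "\<kappa> powr \<alpha> * \<kappa> powr (1 - \<alpha>) * T \<le> (1 + \<theta>) * (M 1 \<kappa> * \<kappa> powr (1 - \<alpha>) * T)"
    using lg by (simp flip: powr_add)
  then have F: "\<kappa> powr \<alpha> * (\<kappa> powr (1 - \<alpha>) * T) \<le> ((1 + \<theta>) * M 1 \<kappa>) * (\<kappa> powr (1 - \<alpha>) * T)"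
    by (simp add: algebra_simps)
  have "0 < \<kappa> powr (1 - \<alpha>) * T" using T lg by simp
  then have "\<kappa> powr \<alpha> \<le> (1 + \<theta>) * M 1 \<kappa>" using F mult_right_le_imp_le by blast
  then show ?thesis using th by (simp add: divide_le_eq algebra_simps)
qed

lemma M_near:
  assumes th: "0 < \<theta>" and A: "0 < A" "0 < B"
    and d: "\<bar>A - B\<bar> \<le> \<theta> / (2 * (1 + \<theta>)) * min A B"
  shows "max A B powr \<alpha> / (1 + \<theta>) \<le> M A B"
proof -
  have main: "B powr \<alpha> / (1 + \<theta>) \<le> M A B" if "0 < A" "A \<le> B" "B - A \<le> \<theta> / (2 * (1 + \<theta>)) * A" for A B
  proof -
    define \<kappa> where "\<kappa> = B / A"
    have k1: "1 \<le> \<kappa>" using that by (simp add: \<kappa>_def)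
    have k2: "\<kappa> \<le> 1 + \<theta> / (2 * (1 + \<theta>))"
    proof -
      have "B \<le> A * (1 + \<theta> / (2 * (1 + \<theta>)))" using that by (simp add: algebra_simps)
      then show ?thesis using that by (simp add: \<kappa>_def divide_le_eq mult.commute)
    qed
    have "M A B = M (A * 1) (A * \<kappa>)" using that by (simp add: \<kappa>_def)
    also have "\<dots> = A powr \<alpha> * M 1 \<kappa>" using that k1 by (intro M_hom) auto
    finally have MA: "M A B = A powr \<alpha> * M 1 \<kappa>" .
    have "B powr \<alpha> = A powr \<alpha> * \<kappa> powr \<alpha>" using that by (simp add: \<kappa>_def powr_divide)
    then have "B powr \<alpha> / (1 + \<theta>) = A powr \<alpha> * (\<kappa> powr \<alpha> / (1 + \<theta>))" by simp
    also have "\<dots> \<le> A powr \<alpha> * M 1 \<kappa>" using M_near1[OF th k1 k2] by (intro mult_left_mono) auto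
    finally show ?thesis using MA by simp
  qed
  show ?thesis
  proof (cases "A \<le> B")
    case True then show ?thesis using main[of A B] A d by (simp add: max_def min_def)
  next
    case False then show ?thesis using main[of B A] A d M_sym[of A B] by (simp add: max_def min_def)
  qed
qed

lemma rho_near:
  assumes th: "0 < \<theta>" and zw: "z \<noteq> w"
    and d: "norm (z - w) \<le> \<theta> / (2 * (1 + \<theta>)) * min (norm z) (norm w)"
  shows "rho z w \<le> (1 + \<theta>) * norm (z - w) * max (norm z) (norm w) powr (- \<alpha>)"
proof -
  have D: "norm (z - w) > 0" using zw by simp
  have c: "\<theta> / (2 * (1 + \<theta>)) > 0" using th by simp
  have "0 < \<theta> / (2 * (1 + \<theta>)) * min (norm z) (norm w)" using d D by linarith
  then have "min (norm z) (norm w) > 0" using zero_less_mult_pos c by blast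
  then have A: "norm z > 0" "norm w > 0" by auto
  have "\<bar>norm z - norm w\<bar> \<le> norm (z - w)" by (rule norm_triangle_ineq3)
  then have Mn: "max (norm z) (norm w) powr \<alpha> / (1 + \<theta>) \<le> M (norm z) (norm w)"
    using d by (intro M_near[OF th A]) linarith
  define mx where "mx = max (norm z) (norm w)"
  have mx: "mx > 0" using A by (simp add: mx_def less_max_iff_disj)
  have "rho z w = norm (z - w) / M (norm z) (norm w)" by (simp add: rhoM_def)
  also have "\<dots> \<le> norm (z - w) / (mx powr \<alpha> / (1 + \<theta>))"
  proof -
    have p: "mx powr \<alpha> / (1 + \<theta>) > 0" using mx th by simp
    then have "M (norm z) (norm w) > 0" using Mn by (simp add: mx_def)
    then have q: "0 < M (norm z) (norm w) * (mx powr \<alpha> / (1 + \<theta>))" using p by (rule mult_pos_pos)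
    have Mn': "mx powr \<alpha> / (1 + \<theta>) \<le> M (norm z) (norm w)" using Mn by (simp add: mx_def)
    show ?thesis by (rule divide_left_mono[OF Mn' _ q]) simp
  qed
  also have "\<dots> = (1 + \<theta>) * norm (z - w) * mx powr (- \<alpha>)"
    using mx by (simp add: powr_minus field_simps)
  finally show ?thesis by (simp add: mx_def)
qed

lemma rho_global:
  assumes zw: "z \<noteq> w"
  shows "rho z w \<le> (2 / m0) * norm (z - w) * max (norm z) (norm w) powr (- \<alpha>)"
proof -
  have D: "norm (z - w) > 0" using zw by simp
  have AB: "norm z + norm w > 0"
  proof (cases "z = 0")
    case True then show ?thesis using zw by simp
  next
    case False then show ?thesis by (simp add: add_pos_nonneg)
  qed
  define mx where "mx = max (norm z) (norm w)"
  have mx: "mx > 0" using AB by (auto simp: mx_def max_def)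
  have Mn: "m0 * mx powr \<alpha> / 2 \<le> M (norm z) (norm w)"
    using M_low_global[OF _ _ AB] by (simp add: mx_def)
  have "rho z w = norm (z - w) / M (norm z) (norm w)" by (simp add: rhoM_def)
  also have "\<dots> \<le> norm (z - w) / (m0 * mx powr \<alpha> / 2)"
  proof -
    have p: "m0 * mx powr \<alpha> / 2 > 0" using mx m0_pos by simp
    then have "M (norm z) (norm w) > 0" using Mn by linarith
    then show ?thesis using Mn p D by (intro divide_left_mono) auto
  qed
  also have "\<dots> = (2 / m0) * norm (z - w) * mx powr (- \<alpha>)"
    using mx m0_pos by (simp add: powr_minus field_simps)
  finally show ?thesis by (simp add: mx_def)
qed

end


lemma phi_cont: assumes "0 < q" shows "continuous_on UNIV (phi q)"
proof -
  have eq: "phi q = (\<lambda>u. if id u \<le> 0 then - ((- u) powr q) else u powr q)"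
    by (rule ext) (auto simp: phi_def)
  have c1: "continuous_on {x \<in> UNIV. id x \<le> (0::real)} (\<lambda>u. - ((- u) powr q))"
    using assms by (intro continuous_intros continuous_on_powr') auto
  have c2: "continuous_on {x \<in> UNIV. (0::real) \<le> id x} (\<lambda>u. u powr q)"
    using assms by (intro continuous_intros continuous_on_powr') auto
  show ?thesis unfolding eq
    by (rule continuous_on_cases_le[OF c1 c2]) (auto intro: continuous_intros)
qed

definition clamp :: "real \<Rightarrow> real \<Rightarrow> real" where "clamp R u = max (- R) (min R u)"

lemma clamp_mono: "u \<le> w \<Longrightarrow> clamp R u \<le> clamp R w" by (simp add: clamp_def)
lemma clamp_id: "\<bar>u\<bar> \<le> R \<Longrightarrow> clamp R u = u" by (simp add: clamp_def)
lemma clamp_bound: "0 \<le> R \<Longrightarrow> \<bar>clamp R u\<bar> \<le> R" by (simp add: clamp_def)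

context Mset begin

lemma seg_term:
  fixes x y :: 'a
  defines "a \<equiv> norm x" and "b \<equiv> norm y" and "Ld \<equiv> norm (x - y)"
  defines "S \<equiv> a + b" and "q \<equiv> 1 - \<alpha>"
  defines "C0 \<equiv> Ld / (S * q)" and "K \<equiv> 2 / m0"
  assumes xy: "x \<noteq> y" and th: "0 < \<theta>" and R: "Ld * \<delta> * (1 + 1 / (\<theta> / (2 * (1 + \<theta>)))) \<le> R"
    and st: "0 \<le> s" "s < t" "t \<le> 1" "t - s < \<delta>"
  shows "rho (x + s *\<^sub>R (y - x)) (x + t *\<^sub>R (y - x)) \<le>
     C0 * ((1 + \<theta>) * (phi q (a - S * s) - phi q (a - S * t)) +
           K * (phi q (clamp R (a - S * s)) - phi q (clamp R (a - S * t))))"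
proof -
  define \<epsilon> where "\<epsilon> = \<theta> / (2 * (1 + \<theta>))"
  have \<epsilon>: "\<epsilon> > 0" using th by (simp add: \<epsilon>_def)
  define z where "z = x + s *\<^sub>R (y - x)"
  define w where "w = x + t *\<^sub>R (y - x)"
  define us where "us = a - S * s"
  define ut where "ut = a - S * t"
  have Ldp: "Ld > 0" using xy by (simp add: Ld_def)
  have Sp: "S > 0" using xy by (cases "x = 0") (auto simp: S_def a_def b_def add_pos_nonneg)
  have q: "0 < q" "q \<le> 1" using alpha by (auto simp: q_def)
  have C0: "C0 > 0" using Ldp Sp q by (simp add: C0_def)
  have Kp: "K > 0" using m0_pos by (simp add: K_def)
  have nlow: "\<bar>a - S * r\<bar> \<le> norm (x + r *\<^sub>R (y - x))" if "0 \<le> r" "r \<le> 1" for r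
  proof -
    have "x + r *\<^sub>R (y - x) = (1 - r) *\<^sub>R x - (- (r *\<^sub>R y))" by (simp add: algebra_simps)
    moreover have "\<bar>norm ((1 - r) *\<^sub>R x) - norm (- (r *\<^sub>R y))\<bar> \<le> norm ((1 - r) *\<^sub>R x - (- (r *\<^sub>R y)))"
      by (rule norm_triangle_ineq3)
    moreover have "norm ((1 - r) *\<^sub>R x) - norm (- (r *\<^sub>R y)) = a - S * r"
    proof -
      have "norm ((1 - r) *\<^sub>R x) = (1 - r) * a" unfolding norm_scaleR a_def using that by simp
      moreover have "norm (- (r *\<^sub>R y)) = r * b" unfolding norm_minus_cancel norm_scaleR b_def using that by simp
      ultimately show ?thesis by (simp add: S_def algebra_simps)
    qed
    ultimately show ?thesis by simp
  qed
  have A: "\<bar>us\<bar> \<le> norm z" "\<bar>ut\<bar> \<le> norm w" using nlow st by (auto simp: us_def ut_def z_def w_def)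
  have zw: "z - w = (s - t) *\<^sub>R (y - x)" by (simp add: z_def w_def algebra_simps)
  have D: "norm (z - w) = Ld * (t - s)" using st
    by (simp add: zw Ld_def norm_minus_commute)
  have Dp: "norm (z - w) > 0" using D Ldp st by simp
  then have zne: "z \<noteq> w" by auto
  have uu: "us - ut = S * (t - s)" by (simp add: us_def ut_def algebra_simps)
  have "S * (t - s) > 0" using Sp st by simp
  then have ult: "ut < us" using uu by simp
  define mx where "mx = max (norm z) (norm w)"
  define mu where "mu = max \<bar>us\<bar> \<bar>ut\<bar>"
  have mu: "mu > 0" using ult by (auto simp: mu_def less_max_iff_disj)
  have mxmu: "mu \<le> mx" using A by (auto simp: mu_def mx_def)
  have dphi: "0 \<le> phi q us - phi q ut" using phi_mono[OF q(1), of ut us] ult by simp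
  have dphiR: "0 \<le> phi q (clamp R us) - phi q (clamp R ut)"
    using phi_mono[OF q(1) clamp_mono[of ut us R]] ult by simp
  have base: "norm (z - w) * mx powr (- \<alpha>) \<le> C0 * (phi q us - phi q ut)"
  proof -
    have "mx powr (- \<alpha>) \<le> mu powr (- \<alpha>)" using mu mxmu alpha by (intro powr_mono2') auto
    then have "norm (z - w) * mx powr (- \<alpha>) \<le> norm (z - w) * mu powr (- \<alpha>)"
      using Dp by (simp add: mult_left_mono)
    also have "norm (z - w) * mu powr (- \<alpha>) = (Ld / S) * ((us - ut) * mu powr (q - 1))"
      using D uu Sp by (simp add: q_def)
    also have "\<dots> \<le> (Ld / S) * ((phi q us - phi q ut) / q)"
      using key_P1[OF ult q] Ldp Sp by (intro mult_left_mono) (auto simp: mu_def)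
    also have "\<dots> = C0 * (phi q us - phi q ut)" by (simp add: C0_def)
    finally show ?thesis .
  qed
  show ?thesis
  proof (cases "norm (z - w) \<le> \<epsilon> * min (norm z) (norm w)")
    case True
    have "rho z w \<le> (1 + \<theta>) * (norm (z - w) * mx powr (- \<alpha>))"
      using rho_near[OF th zne] True by (simp add: \<epsilon>_def mx_def algebra_simps)
    also have "\<dots> \<le> (1 + \<theta>) * (C0 * (phi q us - phi q ut))"
      using base th by (intro mult_left_mono) auto
    also have "\<dots> \<le> C0 * ((1 + \<theta>) * (phi q us - phi q ut) + K * (phi q (clamp R us) - phi q (clamp R ut)))"
      using C0 Kp dphiR by (simp add: algebra_simps)
    finally show ?thesis by (simp add: z_def w_def us_def ut_def)
  next
    case False
    have "min (norm z) (norm w) < norm (z - w) / \<epsilon>" using False \<epsilon> by (simp add: field_simps)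
    moreover have "\<bar>norm z - norm w\<bar> \<le> norm (z - w)" by (rule norm_triangle_ineq3)
    ultimately have "mx < norm (z - w) / \<epsilon> + norm (z - w)" by (auto simp: mx_def)
    also have "\<dots> = norm (z - w) * (1 + 1 / \<epsilon>)" by (simp add: algebra_simps)
    also have "\<dots> \<le> Ld * \<delta> * (1 + 1 / \<epsilon>)"
      using D st Ldp \<epsilon> by (intro mult_right_mono) auto
    also have "\<dots> \<le> R" using R by (simp add: \<epsilon>_def)
    finally have mxR: "mx < R" .
    have cs: "clamp R us = us" "clamp R ut = ut" using A mxR
      by (auto intro!: clamp_id simp: mx_def)
    have "rho z w \<le> K * (norm (z - w) * mx powr (- \<alpha>))"
      using rho_global[OF zne] by (simp add: K_def mx_def algebra_simps)
    also have "\<dots> \<le> K * (C0 * (phi q us - phi q ut))"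
      using base Kp by (intro mult_left_mono) auto
    also have "\<dots> = C0 * (K * (phi q (clamp R us) - phi q (clamp R ut)))" using cs by simp
    also have "\<dots> \<le> C0 * ((1 + \<theta>) * (phi q us - phi q ut) + K * (phi q (clamp R us) - phi q (clamp R ut)))"
      using C0 th dphi by (intro mult_left_mono) auto
    finally show ?thesis by (simp add: z_def w_def us_def ut_def)
  qed
qed

lemma seg_length:
  fixes x y :: 'a
  assumes xy: "x \<noteq> y"
  shows "\<exists>L. has_M_length M 1 (\<lambda>t. x + t *\<^sub>R (y - x)) L \<and>
     L \<le> norm (x - y) / ((norm x + norm y) * (1 - \<alpha>)) * (norm x powr (1 - \<alpha>) + norm y powr (1 - \<alpha>))"
proof -
  define a where "a = norm x"
  define b where "b = norm y"
  define Ld where "Ld = norm (x - y)"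
  define S where "S = a + b"
  define q where "q = 1 - \<alpha>"
  define C0 where "C0 = Ld / (S * q)"
  define K where "K = 2 / m0"
  define \<gamma> where "\<gamma> = (\<lambda>t. x + t *\<^sub>R (y - x))"
  define G where "G t = phi q (a - S * t)" for t
  define P where "P = a powr q + b powr q"
  have Ldp: "Ld > 0" using xy by (simp add: Ld_def)
  have Sp: "S > 0" using xy by (cases "x = 0") (auto simp: S_def a_def b_def add_pos_nonneg)
  have q: "0 < q" "q \<le> 1" using alpha by (auto simp: q_def)
  have C0: "C0 > 0" using Ldp Sp q by (simp add: C0_def)
  have Kp: "K > 0" using m0_pos by (simp add: K_def)
  have Pn: "P \<ge> 0" by (simp add: P_def)
  have ab: "a \<ge> 0" "b \<ge> 0" by (auto simp: a_def b_def)
  have G0: "G 0 = a powr q" using ab by (simp add: G_def phi_def)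
  have G1: "G 1 = - (b powr q)" using ab by (auto simp: G_def phi_def S_def)
  have uS: "\<bar>a - S * r\<bar> \<le> S" if "0 \<le> r" "r \<le> 1" for r
  proof -
    have "S * r \<le> S" using Sp that by (simp add: mult_left_le_one_le)
    moreover have "0 \<le> S * r" using Sp that by simp
    ultimately show ?thesis using ab by (simp add: S_def abs_le_iff)
  qed
  have trm: "rho (\<gamma> s) (\<gamma> t) \<le> C0 * ((1 + \<theta>) * (G s - G t) +
           K * (phi q (clamp R (a - S * s)) - phi q (clamp R (a - S * t))))"
    if "0 < \<theta>" "Ld * \<delta> * (1 + 1 / (\<theta> / (2 * (1 + \<theta>)))) \<le> R" "0 \<le> s" "s < t" "t \<le> 1" "t - s < \<delta>"
    for \<theta> R \<delta> s t
    using seg_term[OF xy, of \<theta> \<delta> R s t] that unfolding \<gamma>_def G_def a_def b_def Ld_def S_def q_def C0_def K_def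
    by simp
  have Gc: "continuous_on {0..1} G"
  proof -
    have "continuous_on {0..1} (\<lambda>t. a - S * t)" by (intro continuous_intros)
    moreover have "continuous_on ((\<lambda>t. a - S * t) ` {0..1}) (phi q)"
      using phi_cont[OF q(1)] by (rule continuous_on_subset) simp
    ultimately show ?thesis unfolding G_def using continuous_on_compose[of "{0..1}" "\<lambda>t. a - S * t" "phi q"]
      by (simp add: o_def)
  qed
  then have Guc: "uniformly_continuous_on {0..1} G" by (intro compact_uniformly_continuous) auto
  have uc: "\<exists>\<delta>>0. \<forall>s t. 0 \<le> s \<longrightarrow> s \<le> t \<longrightarrow> t \<le> 1 \<longrightarrow> t - s < \<delta> \<longrightarrow> rho (\<gamma> s) (\<gamma> t) \<le> \<eta>"
    if \<eta>: "\<eta> > 0" for \<eta>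
  proof -
    define c where "c = C0 * (2 + K)"
    have c: "c > 0" using C0 Kp by (simp add: c_def)
    have ec: "\<eta> / c > 0" using \<eta> c by simp
    obtain d where d: "d > 0" "\<forall>t\<in>{0..1}. \<forall>t'\<in>{0..1}. dist t' t < d \<longrightarrow> dist (G t') (G t) < \<eta> / c"
      using Guc[unfolded uniformly_continuous_on_def, rule_format, OF ec] by blast
    define R where "R = max (Ld * 2 * (1 + 1 / (1 / (2 * (1 + 1))))) S"
    have R1: "Ld * 2 * (1 + 1 / (1 / (2 * (1 + 1)))) \<le> R" and R2: "S \<le> R" by (simp_all add: R_def)
    have "\<forall>s t. 0 \<le> s \<longrightarrow> s \<le> t \<longrightarrow> t \<le> 1 \<longrightarrow> t - s < d \<longrightarrow> rho (\<gamma> s) (\<gamma> t) \<le> \<eta>"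
    proof (intro allI impI)
      fix s t :: real assume st: "0 \<le> s" "s \<le> t" "t \<le> 1" "t - s < d"
      show "rho (\<gamma> s) (\<gamma> t) \<le> \<eta>"
      proof (cases "s = t")
        case True then show ?thesis using \<eta> rho_xx by simp
      next
        case False
        then have st': "s < t" using st by simp
        have t1: "t - s < 2" using st by simp
        have "rho (\<gamma> s) (\<gamma> t) \<le> C0 * ((1 + 1) * (G s - G t) +
           K * (phi q (clamp R (a - S * s)) - phi q (clamp R (a - S * t))))"
          using trm[of 1 2 R s t] R1 st st' t1 by simp
        also have "clamp R (a - S * s) = a - S * s" using uS[of s] st R2
          by (intro clamp_id) linarith
        also have "clamp R (a - S * t) = a - S * t" using uS[of t] st R2
          by (intro clamp_id) linarith
        also have "C0 * ((1 + 1) * (G s - G t) + K * (phi q (a - S * s) - phi q (a - S * t)))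
             = c * (G s - G t)" by (simp add: c_def G_def algebra_simps)
        also have "\<dots> \<le> c * (\<eta> / c)"
        proof -
          have "dist (G s) (G t) < \<eta> / c" using d st by (auto simp: dist_real_def)
          then show ?thesis using c by (intro mult_left_mono) (auto simp: dist_real_def)
        qed
        also have "\<dots> = \<eta>" using c by simp
        finally show ?thesis .
      qed
    qed
    then show ?thesis using d by blast
  qed
  have fine: "\<exists>\<delta>>0. \<forall>k t. is_partition 1 k t \<longrightarrow> mesh k t < \<delta> \<longrightarrow> partition_sum rho \<gamma> k t \<le> C0 * P + \<eta>"
    if \<eta>: "\<eta> > 0" for \<eta>
  proof -
    define \<theta> where "\<theta> = \<eta> / (2 * (C0 * P) + 1)"
    have "0 \<le> C0 * P" using C0 Pn by simp
    then have "2 * (C0 * P) + 1 > 0" by linarith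
    then have th: "\<theta> > 0" using \<eta> unfolding \<theta>_def by (rule divide_pos_pos[rotated])
    define \<epsilon> where "\<epsilon> = \<theta> / (2 * (1 + \<theta>))"
    have \<epsilon>: "\<epsilon> > 0" using th by (simp add: \<epsilon>_def)
    define R where "R = (\<eta> / (4 * C0 * K)) powr (1 / q)"
    have Rp: "R > 0" using \<eta> C0 Kp by (simp add: R_def)
    have Rq: "R powr q = \<eta> / (4 * C0 * K)" using \<eta> C0 Kp q by (simp add: R_def powr_powr)
    define \<delta> where "\<delta> = R / (Ld * (1 + 1 / \<epsilon>))"
    have dp: "\<delta> > 0" using Rp Ldp \<epsilon> by (simp add: \<delta>_def add_pos_pos)
    have dR: "Ld * \<delta> * (1 + 1 / (\<theta> / (2 * (1 + \<theta>)))) \<le> R"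
    proof -
      have e: "\<theta> / (2 * (1 + \<theta>)) = \<epsilon>" by (simp add: \<epsilon>_def)
      have "1 + 1 / \<epsilon> > 0" using \<epsilon> by (simp add: add_pos_pos)
      then have "Ld * \<delta> * (1 + 1 / \<epsilon>) = R" using Ldp by (simp add: \<delta>_def)
      then show ?thesis by (simp only: e)
    qed
    define H where "H r = phi q (clamp R (a - S * r))" for r
    have Hb: "\<bar>H r\<bar> \<le> R powr q" for r
      unfolding H_def phi_bound[OF q(1)] using clamp_bound[of R] Rp q by (intro powr_mono2) auto
    have "\<forall>k t. is_partition 1 k t \<longrightarrow> mesh k t < \<delta> \<longrightarrow> partition_sum rho \<gamma> k t \<le> C0 * P + \<eta>"
    proof (intro allI impI)
      fix k t assume P: "is_partition 1 k t" and m: "mesh k t < \<delta>"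
      have "partition_sum rho \<gamma> k t \<le> (\<Sum>i<k. C0 * ((1 + \<theta>) * (G (t i) - G (t (Suc i))) + K * (H (t i) - H (t (Suc i)))))"
        unfolding partition_sum_def H_def
      proof (intro sum_mono)
        fix i assume i: "i \<in> {..<k}"
        have g: "t (Suc i) - t i < \<delta>" using gap_le_mesh[of i k t] i m by simp
        show "rho (\<gamma> (t i)) (\<gamma> (t (Suc i))) \<le> C0 * ((1 + \<theta>) * (G (t i) - G (t (Suc i))) +
             K * (phi q (clamp R (a - S * t i)) - phi q (clamp R (a - S * t (Suc i)))))"
        proof -
          have i': "i < k" using i by simp
          have r: "0 \<le> t i" "t i < t (Suc i)" "t (Suc i) \<le> 1"
            using part_range[OF P, of i] part_range[OF P, of "Suc i"] P i' by (auto simp: is_partition_def)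
          show ?thesis by (rule trm[OF th dR r g])
        qed
      qed
      also have "\<dots> = C0 * ((1 + \<theta>) * (\<Sum>i<k. G (t i) - G (t (Suc i))) + K * (\<Sum>i<k. H (t i) - H (t (Suc i))))"
        by (simp only: sum_distrib_left sum.distrib[symmetric])
      also have "\<dots> = C0 * ((1 + \<theta>) * (G 0 - G 1) + K * (H (t 0) - H (t k)))"
        using P sum_lessThan_telescope'[of "\<lambda>i. G (t i)" k] sum_lessThan_telescope'[of "\<lambda>i. H (t i)" k]
        by (simp add: is_partition_def)
      also have "\<dots> \<le> C0 * ((1 + \<theta>) * P + K * (2 * R powr q))"
      proof -
        have "H (t 0) - H (t k) \<le> 2 * R powr q" using Hb[of "t 0"] Hb[of "t k"] by linarith
        then show ?thesis using G0 G1 C0 Kp by (simp add: P_def)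
      qed
      also have "\<dots> = C0 * P + \<theta> * (C0 * P) + C0 * (K * (2 * R powr q))"
        by (simp add: algebra_simps)
      also have "C0 * (K * (2 * R powr q)) = \<eta> / 2" unfolding Rq using C0 Kp by simp
      also have "\<theta> * (C0 * P) \<le> \<eta> / 2"
      proof -
        have "\<theta> * (C0 * P) = \<eta> * (C0 * P) / (2 * (C0 * P) + 1)" by (simp add: \<theta>_def)
        also have "\<dots> \<le> \<eta> / 2"
        proof -
          have "0 \<le> C0 * P" using C0 Pn by simp
          then have den: "2 * (C0 * P) + 1 > 0" by linarith
          have "\<eta> * (C0 * P) \<le> \<eta> / 2 * (2 * (C0 * P) + 1)" using \<eta> by (simp add: algebra_simps)
          then show ?thesis by (simp add: pos_divide_le_eq[OF den])
        qed
        finally show ?thesis .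
      qed
      finally show "partition_sum rho \<gamma> k t \<le> C0 * P + \<eta>" by simp
    qed
    then show ?thesis using dp by blast
  qed
  obtain L where L: "L \<le> C0 * P"
    "\<forall>\<epsilon>>0. \<exists>\<delta>>0. \<forall>k t. is_partition 1 k t \<and> mesh k t < \<delta> \<longrightarrow> \<bar>partition_sum rho \<gamma> k t - L\<bar> < \<epsilon>"
    using limit_lemma[where d=rho and \<gamma>=\<gamma> and l=1 and B="C0 * P", OF _ rho_tri rho_xx rho_sym rho_nn uc fine]
    by auto
  have "has_M_length M 1 \<gamma> L" unfolding has_M_length_def using L(2) by blast
  moreover have "C0 * P = norm (x - y) / ((norm x + norm y) * (1 - \<alpha>)) * (norm x powr (1 - \<alpha>) + norm y powr (1 - \<alpha>))"
    by (simp add: C0_def P_def Ld_def S_def q_def a_def b_def)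
  ultimately show ?thesis using L(1) unfolding \<gamma>_def by auto
qed

end


context Mset begin

lemma quasi_main:
  assumes hM: "\<And>A B. 0 \<le> A \<Longrightarrow> 0 \<le> B \<Longrightarrow> 0 < A + B \<Longrightarrow> M A B \<le> c * (1 - \<alpha>) * ((A + B) / 2) powr \<alpha>"
  shows "quasiconvex M c TYPE('a)"
  unfolding quasiconvex_def
proof (intro allI)
  fix x y :: 'a
  define Sset where "Sset = {L. \<exists>l \<gamma>. rectifiable_on l \<gamma> \<and> \<gamma> 0 = x \<and> \<gamma> l = y \<and> has_M_length M l \<gamma> L}"
  have key: "\<exists>L\<in>Sset. L \<le> c * rho x y"
  proof (cases "x = y")
    case True
    have r: "rectifiable_on 1 (\<lambda>t::real. x)" unfolding rectifiable_on_def
      by (auto simp: partition_sum_def)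
    have h: "has_M_length M 1 (\<lambda>t::real. x) 0" unfolding has_M_length_def
      by (auto simp: partition_sum_def rhoM_def intro: exI[of _ 1])
    have "0 \<in> Sset" unfolding Sset_def using r h True by blast
    then show ?thesis using True by (intro bexI[of _ 0]) (auto simp: rhoM_def)
  next
    case False
    define \<gamma> where "\<gamma> = (\<lambda>t::real. x + t *\<^sub>R (y - x))"
    define a where "a = norm x"
    define b where "b = norm y"
    define Ld where "Ld = norm (x - y)"
    define S where "S = a + b"
    define q where "q = 1 - \<alpha>"
    have Ldp: "Ld > 0" using False by (simp add: Ld_def)
    have Sp: "S > 0" using False by (cases "x = 0") (auto simp: S_def a_def b_def add_pos_nonneg)
    have q: "0 < q" "q \<le> 1" using alpha by (auto simp: q_def)
    have ab: "a \<ge> 0" "b \<ge> 0" by (auto simp: a_def b_def)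
    obtain L where L: "has_M_length M 1 \<gamma> L" "L \<le> Ld / (S * q) * (a powr q + b powr q)"
      using seg_length[OF False] unfolding \<gamma>_def a_def b_def Ld_def S_def q_def by blast
    have rect: "rectifiable_on 1 \<gamma>" unfolding rectifiable_on_def
    proof (intro conjI)
      show "continuous_on {0..1} \<gamma>" unfolding \<gamma>_def by (intro continuous_intros)
      show "\<exists>B. \<forall>k t. is_partition 1 k t \<longrightarrow> partition_sum dist \<gamma> k t \<le> B"
      proof (intro exI allI impI)
        fix k t assume P: "is_partition 1 k t"
        have "partition_sum dist \<gamma> k t = (\<Sum>i<k. Ld * (t (Suc i) - t i))"
          unfolding partition_sum_def
        proof (intro sum.cong refl)
          fix i assume "i \<in> {..<k}"
          then have "t i < t (Suc i)" using P by (auto simp: is_partition_def)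
          moreover have "\<gamma> (t i) - \<gamma> (t (Suc i)) = (t i - t (Suc i)) *\<^sub>R (y - x)"
            by (simp add: \<gamma>_def algebra_simps)
          ultimately show "dist (\<gamma> (t i)) (\<gamma> (t (Suc i))) = Ld * (t (Suc i) - t i)"
            by (simp add: dist_norm Ld_def norm_minus_commute)
        qed
        also have "\<dots> = Ld * (t k - t 0)"
          using sum_lessThan_telescope[of "\<lambda>i. t i" k] by (simp add: sum_distrib_left[symmetric])
        also have "\<dots> = Ld" using P by (simp add: is_partition_def)
        finally show "partition_sum dist \<gamma> k t \<le> Ld" by simp
      qed
    qed simp
    have "\<gamma> 0 = x" "\<gamma> 1 = y" by (simp_all add: \<gamma>_def)
    then have LS: "L \<in> Sset" unfolding Sset_def using rect L(1) by blast
    have Mp: "M a b > 0" using M_pos[of a b] ab Sp by (simp add: S_def)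
    have Mle: "M a b \<le> c * q * (S / 2) powr \<alpha>" using hM[of a b] ab Sp by (simp add: S_def q_def)
    have cq: "c * q * (S / 2) powr \<alpha> > 0" using Mp Mle by linarith
    have sp: "(S / 2) powr \<alpha> > 0" using Sp by simp
    have cp: "c > 0" using cq sp q by (simp add: zero_less_mult_iff)
    have "a powr q + b powr q \<le> 2 * (S / 2) powr q"
      using mean_powr[OF ab q] by (simp add: S_def)
    then have "L \<le> Ld / (S * q) * (2 * (S / 2) powr q)"
      using L(2) Ldp Sp q by (smt (verit) divide_pos_pos mult_left_mono mult_pos_pos)
    also have "Ld / (S * q) * (2 * (S / 2) powr q) = Ld / (q * (S / 2) powr \<alpha>)"
    proof -
      have "(S / 2) powr q = (S / 2) powr (1 + (- \<alpha>))" by (simp add: q_def)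
      also have "\<dots> = (S / 2) powr 1 * (S / 2) powr (- \<alpha>)" by (rule powr_add)
      also have "\<dots> = (S / 2) * (S / 2) powr (- \<alpha>)" using Sp by simp
      finally have "(S / 2) powr q = (S / 2) * (S / 2) powr (- \<alpha>)" .
      then show ?thesis using Sp q by (simp add: powr_minus field_simps)
    qed
    also have "\<dots> = c * Ld / (c * q * (S / 2) powr \<alpha>)" using cp by simp
    also have "\<dots> \<le> c * Ld / M a b"
      using Mp Mle cp Ldp by (intro divide_left_mono) auto
    also have "c * Ld / M a b = c * rho x y" by (simp add: rhoM_def Ld_def a_def b_def)
    finally show ?thesis using LS by blast
  qed
  then obtain L where "L \<in> Sset" "L \<le> c * rho x y" by blast
  then have "Inf (ereal ` Sset) \<le> ereal L" by (intro Inf_lower) auto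
  also have "\<dots> \<le> ereal (c * rho x y)" using \<open>L \<le> _\<close> by simp
  finally show "Inf (ereal ` {L. \<exists>l \<gamma>. rectifiable_on l \<gamma> \<and> \<gamma> 0 = x \<and> \<gamma> l = y \<and> has_M_length M l \<gamma> L})
      \<le> ereal (c * rhoM M x y)" unfolding Sset_def .
qed

end


theorem corollary4p3:
  fixes M :: "real \<Rightarrow> real \<Rightarrow> real" and \<alpha> :: real
  assumes n2: "CARD('n::finite) \<ge> 2"
    and alpha: "0 < \<alpha>" "\<alpha> \<le> 1"
    and M_nonneg: "\<And>x y. 0 \<le> x \<Longrightarrow> 0 \<le> y \<Longrightarrow> 0 \<le> M x y"
    and M_sym: "\<And>x y. 0 \<le> x \<Longrightarrow> 0 \<le> y \<Longrightarrow> M x y = M y x"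
    and M_hom: "\<And>t x y. 0 < t \<Longrightarrow> 0 \<le> x \<Longrightarrow> 0 \<le> y \<Longrightarrow> M (t * x) (t * y) = t powr \<alpha> * M x y"
    and M11: "M 1 1 = 1"
    and metric: "Metric_space (UNIV :: (real ^ 'n) set) (rhoM M)"
  shows "(\<alpha> < 1 \<longrightarrow> quasiconvex M (2 powr \<alpha> / (1 - \<alpha>)) TYPE(real ^ 'n))
       \<and> (\<forall>p::ereal. \<alpha> < 1 \<and> 0 < p \<and>
            (\<forall>x y. 0 \<le> x \<longrightarrow> 0 \<le> y \<longrightarrow> M x y \<le> power_mean p x y powr \<alpha>)
            \<longrightarrow> quasiconvex M (c_const p \<alpha>) TYPE(real ^ 'n))"
proof -
  have "\<exists>i j::'n. i \<noteq> j"
  proof (rule ccontr)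
    assume "\<not> (\<exists>i j::'n. i \<noteq> j)"
    then have "(UNIV :: 'n set) = {undefined}" by auto
    then have "card (UNIV :: 'n set) = card {undefined :: 'n}" by (rule arg_cong)
    then have "CARD('n) = 1" by simp
    then show False using n2 by simp
  qed
  then obtain i j :: 'n where ij: "i \<noteq> j" by blast
  define e :: "real ^ 'n" where "e = axis i 1"
  define v :: "real ^ 'n" where "v = axis j 1"
  have e1: "norm e = 1" "norm v = 1" "inner e v = 0"
    using ij by (auto simp: e_def v_def inner_axis_axis)
  have loc: "Mset M \<alpha> e v" if "\<alpha> < 1"
    unfolding Mset_def using that alpha M_nonneg M_sym M_hom M11 metric e1 by auto
  have part1: "quasiconvex M (2 powr \<alpha> / (1 - \<alpha>)) TYPE(real ^ 'n)" if a1: "\<alpha> < 1"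
  proof (rule Mset.quasi_main[OF loc[OF a1]])
    fix A B :: real assume AB: "0 \<le> A" "0 \<le> B" "0 < A + B"
    have "M A B \<le> max A B powr \<alpha>" using Mset.M_upper[OF loc[OF a1] AB(1,2)] .
    also have "\<dots> \<le> (A + B) powr \<alpha>" using AB alpha by (intro powr_mono2) auto
    also have "\<dots> = 2 powr \<alpha> * ((A + B) / 2) powr \<alpha>" using AB by (simp add: powr_divide)
    also have "\<dots> = 2 powr \<alpha> / (1 - \<alpha>) * (1 - \<alpha>) * ((A + B) / 2) powr \<alpha>" using a1 by simp
    finally show "M A B \<le> 2 powr \<alpha> / (1 - \<alpha>) * (1 - \<alpha>) * ((A + B) / 2) powr \<alpha>" .
  qed
  have part2: "quasiconvex M (c_const p \<alpha>) TYPE(real ^ 'n)"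
    if a1: "\<alpha> < 1" and p: "0 < p" and hp: "\<forall>x y. 0 \<le> x \<longrightarrow> 0 \<le> y \<longrightarrow> M x y \<le> power_mean p x y powr \<alpha>" for p
  proof (rule Mset.quasi_main[OF loc[OF a1]])
    fix A B :: real assume AB: "0 \<le> A" "0 \<le> B" "0 < A + B"
    define m where "m = (A + B) / 2"
    have m: "m > 0" using AB by (simp add: m_def)
    have cc: "c_const p \<alpha> * (1 - \<alpha>) = max (2 powr (\<alpha> * (1 - inv_p p))) 1" using a1 by (simp add: c_const_def)
    have "power_mean p A B powr \<alpha> \<le> max (2 powr (\<alpha> * (1 - inv_p p))) 1 * m powr \<alpha>"
    proof (cases p)
      case PInf
      have "power_mean p A B = max A B" using PInf by (simp add: power_mean_def)
      also have "\<dots> \<le> 2 * m" using AB by (simp add: m_def)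
      finally have "power_mean p A B powr \<alpha> \<le> (2 * m) powr \<alpha>"
        using AB alpha by (intro powr_mono2) (auto simp: PInf power_mean_def)
      also have "\<dots> = 2 powr (\<alpha> * (1 - inv_p p)) * m powr \<alpha>" using m PInf by (simp add: inv_p_def powr_mult)
      also have "\<dots> \<le> max (2 powr (\<alpha> * (1 - inv_p p))) 1 * m powr \<alpha>" by (intro mult_right_mono) auto
      finally show ?thesis .
    next
      case MInf then show ?thesis using p by simp
    next
      case (real r)
      have r: "r > 0" using p real by simp
      have pm: "power_mean p A B = ((A powr r + B powr r) / 2) powr (1 / r)"
        using real by (simp add: power_mean_def)
      have ip: "inv_p p = 1 / r" using real by (simp add: inv_p_def)
      have pmn: "0 \<le> power_mean p A B" using pm by simp
      show ?thesis
      proof (cases "r \<le> 1")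
        case True
        have "(A powr r + B powr r) / 2 \<le> m powr r" using mean_powr[OF AB(1,2) r True] by (simp add: m_def)
        then have "power_mean p A B \<le> (m powr r) powr (1 / r)" unfolding pm using r
          by (intro powr_mono2) auto
        also have "\<dots> = m" using r m by (simp add: powr_powr)
        finally have "power_mean p A B powr \<alpha> \<le> m powr \<alpha>" using pmn alpha by (intro powr_mono2) auto
        also have "\<dots> = 1 * m powr \<alpha>" by simp
        also have "\<dots> \<le> max (2 powr (\<alpha> * (1 - inv_p p))) 1 * m powr \<alpha>"
          by (intro mult_right_mono) auto
        finally show ?thesis .
      next
        case False
        have "(A powr r + B powr r) / 2 \<le> (A + B) powr r / 2" using superadd_powr[OF AB(1,2), of r] False by simp
        then have "power_mean p A B \<le> ((A + B) powr r / 2) powr (1 / r)" unfolding pm using r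
          by (intro powr_mono2) auto
        also have "\<dots> = (A + B) / 2 powr (1 / r)" using r AB by (simp add: powr_divide powr_powr)
        also have "\<dots> = 2 powr (1 - 1 / r) * m"
        proof -
          have "2 powr (1 - 1 / r) = 2 / 2 powr (1 / r)" by (simp add: powr_diff)
          moreover have "2 powr (1 / r) > 0" by simp
          ultimately show ?thesis by (simp add: m_def field_simps)
        qed
        finally have "power_mean p A B powr \<alpha> \<le> (2 powr (1 - 1 / r) * m) powr \<alpha>" using pmn alpha
          by (intro powr_mono2) auto
        also have "\<dots> = 2 powr (\<alpha> * (1 - inv_p p)) * m powr \<alpha>" using m ip
          by (simp add: powr_mult powr_powr mult.commute)
        also have "\<dots> \<le> max (2 powr (\<alpha> * (1 - inv_p p))) 1 * m powr \<alpha>" by (intro mult_right_mono) auto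
        finally show ?thesis .
      qed
    qed
    then have X: "power_mean p A B powr \<alpha> \<le> max (2 powr (\<alpha> * (1 - inv_p p))) 1 * m powr \<alpha>" .
    have "M A B \<le> power_mean p A B powr \<alpha>" using hp AB by blast
    also note X
    also have "max (2 powr (\<alpha> * (1 - inv_p p))) 1 * m powr \<alpha> = c_const p \<alpha> * (1 - \<alpha>) * ((A + B) / 2) powr \<alpha>"
      using cc by (simp add: m_def)
    finally show "M A B \<le> c_const p \<alpha> * (1 - \<alpha>) * ((A + B) / 2) powr \<alpha>" .
  qed
  show ?thesis using part1 part2 by blast
qed


end
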